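(* Let $q$ be a prime power and $M,N$ positive integers. Suppose there exists a set of $k_1$ $3$-independent vectors in $(\mathbb{F}_q)^M$ and a set of $k_2$ $3$-independent vectors in $(\mathbb{F}_q)^N$. Then there exists a $3$--orthogonal $(k_1k_2)$--$\mathrm{MOFR}(q^M,q^N;q)$.
   Context: A set of vectors over a field is $t$-independent if each of its subsets of size $t$ is linearly independent. A frequency rectangle of type $\mathrm{FR}(m,n;q)$ is an $m\times n$ array on a symbol set of size $q$ in which each symbol appears exactly $n/q$ times in each row and $m/q$ times in each column. Two frequency rectangles of the same type are orthogonal if upon superimposition each ordered pair of symbols appears the same number of times; a $k$--$\mathrm{MOFR}(m,n;q)$ is a set of $k$ pairwise orthogonal frequency rectangles of type $\mathrm{FR}(m,n;q)$. Such a set is $t$--orthogonal if upon superimposing any $t$ of its members, each of the $q^t$ ordered $t$-tuples of symbols occurs exactly $mn/q^t$ times. *)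

theory Defs
  imports "HOL-Library.Cardinality"
begin

definition vecs :: "nat \<Rightarrow> (nat \<Rightarrow> 'a::zero) set" where
  "vecs M = {v. \<forall>i\<ge>M. v i = 0}"

definition lin_indep_vecs :: "nat \<Rightarrow> (nat \<Rightarrow> 'a::field) set \<Rightarrow> bool" where
  "lin_indep_vecs M T \<longleftrightarrow>
     (\<forall>c :: (nat \<Rightarrow> 'a) \<Rightarrow> 'a. (\<forall>i<M. (\<Sum>v\<in>T. c v * v i) = 0) \<longrightarrow> (\<forall>v\<in>T. c v = 0))"

definition t_independent :: "nat \<Rightarrow> nat \<Rightarrow> (nat \<Rightarrow> 'a::field) set \<Rightarrow> bool" where
  "t_independent t M S \<longleftrightarrow>
     S \<subseteq> vecs M \<and> (\<forall>T\<subseteq>S. card T \<le> t \<longrightarrow> lin_indep_vecs M T)"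

text \<open>Frequency rectangle FR(m,n;q) on the symbol set UNIV :: 'a set, q = CARD('a);
  rows indexed by {0..<m}, columns by {0..<n}.\<close>
definition freq_rect :: "nat \<Rightarrow> nat \<Rightarrow> (nat \<Rightarrow> nat \<Rightarrow> 'a::finite) \<Rightarrow> bool" where
  "freq_rect m n F \<longleftrightarrow>
     CARD('a) dvd m \<and> CARD('a) dvd n \<and>
     (\<forall>i<m. \<forall>s. card {j. j < n \<and> F i j = s} = n div CARD('a)) \<and>
     (\<forall>j<n. \<forall>s. card {i. i < m \<and> F i j = s} = m div CARD('a))"

definition orthogonal_fr :: "nat \<Rightarrow> nat \<Rightarrow> (nat \<Rightarrow> nat \<Rightarrow> 'a::finite) \<Rightarrow> (nat \<Rightarrow> nat \<Rightarrow> 'a) \<Rightarrow> bool" where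
  "orthogonal_fr m n F G \<longleftrightarrow>
     (\<forall>s t. card {(i, j). i < m \<and> j < n \<and> F i j = s \<and> G i j = t} = m * n div CARD('a) ^ 2)"

definition MOFR :: "nat \<Rightarrow> nat \<Rightarrow> nat \<Rightarrow> (nat \<Rightarrow> nat \<Rightarrow> nat \<Rightarrow> 'a::finite) \<Rightarrow> bool" where
  "MOFR k m n L \<longleftrightarrow>
     (\<forall>a<k. freq_rect m n (L a)) \<and>
     (\<forall>a<k. \<forall>b<k. a \<noteq> b \<longrightarrow> orthogonal_fr m n (L a) (L b))"

definition t_orthogonal :: "nat \<Rightarrow> nat \<Rightarrow> nat \<Rightarrow> nat \<Rightarrow> (nat \<Rightarrow> nat \<Rightarrow> nat \<Rightarrow> 'a::finite) \<Rightarrow> bool" where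
  "t_orthogonal t k m n L \<longleftrightarrow>
     (\<forall>idx. inj_on idx {0..<t} \<longrightarrow> idx ` {0..<t} \<subseteq> {0..<k} \<longrightarrow>
       (\<forall>s :: nat \<Rightarrow> 'a.
          card {(i, j). i < m \<and> j < n \<and> (\<forall>l<t. L (idx l) i j = s l)} = m * n div CARD('a) ^ t))"

end

theory Submission
  imports Defs "HOL-Library.FuncSet"
begin

definition vecsI :: "'b set \<Rightarrow> ('b \<Rightarrow> 'a::zero) set" where
  "vecsI I = {v. \<forall>i. i \<notin> I \<longrightarrow> v i = 0}"

definition dotI :: "'b set \<Rightarrow> ('b \<Rightarrow> 'a::comm_ring) \<Rightarrow> ('b \<Rightarrow> 'a) \<Rightarrow> 'a" where
  "dotI I w z = (\<Sum>i\<in>I. w i * z i)"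

lemma card_vecsI:
  assumes "finite I"
  shows "card (vecsI I :: ('b \<Rightarrow> 'a::{finite,zero}) set) = CARD('a) ^ card I"
proof -
  have "bij_betw (\<lambda>f. restrict f I) (vecsI I :: ('b \<Rightarrow> 'a) set) (PiE I (\<lambda>_. UNIV))"
    by (rule bij_betw_byWitness[where f'="\<lambda>g i. if i \<in> I then g i else 0"])
       (auto simp: vecsI_def fun_eq_iff PiE_def extensional_def)
  hence "card (vecsI I :: ('b \<Rightarrow> 'a) set) = card (PiE I (\<lambda>_. (UNIV :: 'a set)))"
    by (rule bij_betw_same_card)
  also have "\<dots> = CARD('a) ^ card I" using assms by (simp add: card_PiE)
  finally show ?thesis .
qed

lemma finite_vecsI:
  assumes "finite I"
  shows "finite (vecsI I :: ('b \<Rightarrow> 'a::{finite,zero}) set)"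
  using card_vecsI[OF assms, where 'a='a] card_ge_0_finite by force

lemma dotI_add: "dotI I w (\<lambda>j. z j + d j) = dotI I w z + dotI I w d"
  by (simp add: dotI_def distrib_left sum.distrib)

lemma dotI_diff: "dotI I w (\<lambda>j. z j - d j) = dotI I w z - dotI I w d"
  by (simp add: dotI_def right_diff_distrib sum_subtractf)

lemma dotI_delta: "finite I \<Longrightarrow> i \<in> I \<Longrightarrow> dotI I w (\<lambda>j. if j = i then x else 0) = w i * x"
  by (simp add: dotI_def if_distrib cong: if_cong)

lemma solv:
  fixes ws :: "nat \<Rightarrow> 'b \<Rightarrow> 'a::field"
  assumes "finite I"
  shows "(\<forall>c. (\<forall>i\<in>I. (\<Sum>l<t. c l * ws l i) = 0) \<longrightarrow> (\<forall>l<t. c l = 0)) \<Longrightarrow>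
         \<exists>z\<in>vecsI I. \<forall>l<t. dotI I (ws l) z = s l"
proof (induction t arbitrary: ws s)
  case 0
  show ?case by (rule bexI[of _ "\<lambda>_. 0"]) (auto simp: vecsI_def)
next
  case (Suc t)
  note ind = Suc.prems
  define w where "w = ws t"
  have "\<exists>i\<in>I. w i \<noteq> 0"
  proof (rule ccontr)
    assume "\<not> ?thesis"
    hence "\<forall>i\<in>I. (\<Sum>l<Suc t. (if l = t then 1 else 0) * ws l i) = 0"
      by (simp add: w_def)
    from ind[THEN spec[of _ "\<lambda>l. if l = t then 1 else 0"], THEN mp, OF this]
    show False by auto
  qed
  then obtain i where iI: "i \<in> I" and wi: "w i \<noteq> 0" by blast
  define ws' where "ws' = (\<lambda>l j. ws l j - (ws l i / w i) * w j)"
  have ind': "\<forall>c. (\<forall>j\<in>I. (\<Sum>l<t. c l * ws' l j) = 0) \<longrightarrow> (\<forall>l<t. c l = 0)"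
  proof (rule allI, rule impI)
    fix c assume h: "\<forall>j\<in>I. (\<Sum>l<t. c l * ws' l j) = 0"
    define c' where "c' = (\<lambda>l. if l < t then c l else - (\<Sum>l<t. c l * ws l i) / w i)"
    have "\<forall>j\<in>I. (\<Sum>l<Suc t. c' l * ws l j) = 0"
    proof
      fix j assume "j \<in> I"
      have "(\<Sum>l<Suc t. c' l * ws l j) = (\<Sum>l<t. c l * ws l j) - (\<Sum>l<t. c l * ws l i) / w i * w j"
        by (simp add: c'_def w_def)
      also have "\<dots> = (\<Sum>l<t. c l * ws' l j)"
        by (simp add: ws'_def right_diff_distrib sum_subtractf sum_distrib_right sum_divide_distrib
              algebra_simps) (simp add: sum_distrib_left mult_ac)
      finally show "(\<Sum>l<Suc t. c' l * ws l j) = 0" using h \<open>j \<in> I\<close> by simp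
    qed
    with ind have "\<forall>l<Suc t. c' l = 0" by blast
    thus "\<forall>l<t. c l = 0" unfolding c'_def by (metis less_SucI)
  qed
  define s' where "s' = (\<lambda>l. s l - (ws l i / w i) * s t)"
  obtain z' where z'V: "z' \<in> vecsI I" and z': "\<forall>l<t. dotI I (ws' l) z' = s' l"
    using Suc.IH[OF ind'] by blast
  define lam where "lam = (s t - dotI I w z') / w i"
  define z where "z = (\<lambda>j. z' j + (if j = i then lam else 0))"
  have dz: "dotI I a z = dotI I a z' + a i * lam" for a
    unfolding z_def dotI_add dotI_delta[OF assms iI] ..
  have wz: "dotI I w z = s t" using wi by (simp add: dz lam_def)
  have dws: "dotI I (ws l) z = dotI I (ws' l) z + (ws l i / w i) * dotI I w z" for l
  proof -
    have "dotI I (ws' l) z + (ws l i / w i) * dotI I w z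
        = (\<Sum>j\<in>I. ws' l j * z j + (ws l i / w i) * (w j * z j))"
      by (simp add: dotI_def sum.distrib sum_distrib_left)
    also have "\<dots> = dotI I (ws l) z" unfolding dotI_def
      by (rule sum.cong) (auto simp: ws'_def algebra_simps)
    finally show ?thesis by simp
  qed
  have ws'i: "ws' l i = 0" for l using wi by (simp add: ws'_def)
  have "\<forall>l<Suc t. dotI I (ws l) z = s l"
  proof (intro allI impI)
    fix l assume "l < Suc t"
    show "dotI I (ws l) z = s l"
    proof (cases "l = t")
      case True thus ?thesis using wz by (simp add: w_def)
    next
      case False
      hence "l < t" using \<open>l < Suc t\<close> by simp
      thus ?thesis using z' dws[of l] dz[of "ws' l"] ws'i wz by (simp add: s'_def)
    qed
  qed
  moreover have "z \<in> vecsI I" using z'V iI by (auto simp: vecsI_def z_def)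
  ultimately show ?case by blast
qed

lemma fiber:
  fixes ws :: "nat \<Rightarrow> 'b \<Rightarrow> 'a::{finite,field}"
  assumes fI: "finite I"
    and ind: "\<forall>c. (\<forall>i\<in>I. (\<Sum>l<t. c l * ws l i) = 0) \<longrightarrow> (\<forall>l<t. c l = 0)"
  shows "card {z\<in>vecsI I. \<forall>l<t. dotI I (ws l) z = s l} * CARD('a) ^ t = CARD('a) ^ card I"
proof -
  define F where "F s = {z\<in>vecsI I. \<forall>l<t. dotI I (ws l) z = s l}" for s
  have eq: "card (F s1) = card (F s2)" for s1 s2
  proof -
    obtain z0 where z0: "z0 \<in> vecsI I" "\<forall>l<t. dotI I (ws l) z0 = s1 l"
      using solv[OF fI ind] by blast
    obtain z1 where z1: "z1 \<in> vecsI I" "\<forall>l<t. dotI I (ws l) z1 = s2 l"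
      using solv[OF fI ind] by blast
    define d where "d = (\<lambda>j. z1 j - z0 j)"
    have dd: "dotI I (ws l) d = s2 l - s1 l" if "l < t" for l
      using z0 z1 that by (simp add: d_def dotI_diff)
    have dV: "d \<in> vecsI I" using z0 z1 by (auto simp: vecsI_def d_def)
    have "bij_betw (\<lambda>z j. z j + d j) (F s1) (F s2)"
      by (rule bij_betw_byWitness[where f'="\<lambda>z j. z j - d j"])
         (use dV dd in \<open>auto simp: F_def dotI_add dotI_diff vecsI_def\<close>)
    thus ?thesis by (rule bij_betw_same_card)
  qed
  define T where "T = (vecsI {..<t} :: (nat \<Rightarrow> 'a) set)"
  have fT: "finite T" unfolding T_def by (rule finite_vecsI) simp
  have cT: "card T = CARD('a) ^ t" unfolding T_def by (subst card_vecsI) auto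
  have U: "(vecsI I :: ('b \<Rightarrow> 'a) set) = (\<Union>s\<in>T. F s)"
  proof
    show "vecsI I \<subseteq> (\<Union>s\<in>T. F s)"
    proof
      fix z :: "'b \<Rightarrow> 'a" assume zV: "z \<in> vecsI I"
      define s0 where "s0 = (\<lambda>l. if l < t then dotI I (ws l) z else 0)"
      have "s0 \<in> T" by (auto simp: T_def vecsI_def s0_def)
      moreover have "z \<in> F s0" using zV by (auto simp: F_def s0_def)
      ultimately show "z \<in> (\<Union>s\<in>T. F s)" by blast
    qed
  qed (auto simp: F_def)
  have "card (vecsI I :: ('b \<Rightarrow> 'a) set) = (\<Sum>s\<in>T. card (F s))"
    unfolding U
  proof (rule card_UN_disjoint[OF fT])
    show "\<forall>i\<in>T. finite (F i)"
      using finite_vecsI[OF fI, where 'a='a] by (auto simp: F_def)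
    show "\<forall>i\<in>T. \<forall>j\<in>T. i \<noteq> j \<longrightarrow> F i \<inter> F j = {}"
    proof (intro ballI impI)
      fix i j assume "i \<in> T" "j \<in> T" "i \<noteq> j"
      then obtain l where "i l \<noteq> j l" by auto
      with \<open>i \<in> T\<close> \<open>j \<in> T\<close> have "l < t" unfolding T_def vecsI_def by (metis (mono_tags) mem_Collect_eq lessThan_iff)
      with \<open>i l \<noteq> j l\<close> show "F i \<inter> F j = {}" by (auto simp: F_def)
    qed
  qed
  also have "\<dots> = (\<Sum>s'\<in>T. card (F s))" by (rule sum.cong) (auto intro: eq)
  also have "\<dots> = card (F s) * CARD('a) ^ t" using cT by simp
  finally show ?thesis using card_vecsI[OF fI, where 'a='a] by (simp add: F_def)
qed

lemma group:
  fixes u :: "nat \<Rightarrow> nat \<Rightarrow> 'a::field" and c :: "nat \<Rightarrow> 'a"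
  assumes li: "lin_indep_vecs M (u ` {..<t})" and h: "\<forall>a<M. (\<Sum>l<t. c l * u l a) = 0"
    and "l < t"
  shows "(\<Sum>l'\<in>{l'\<in>{..<t}. u l' = u l}. c l') = 0"
proof -
  define C where "C v = (\<Sum>l'\<in>{l'\<in>{..<t}. u l' = v}. c l')" for v
  have "(\<Sum>v\<in>u ` {..<t}. C v * v a) = 0" if "a < M" for a
  proof -
    have "(\<Sum>v\<in>u ` {..<t}. C v * v a) = (\<Sum>v\<in>u ` {..<t}. (\<Sum>l'\<in>{l'\<in>{..<t}. u l' = v}. c l' * u l' a))"
      unfolding C_def sum_distrib_right by (rule sum.cong) auto
    also have "\<dots> = (\<Sum>l<t. c l * u l a)" by (rule sum.image_gen[symmetric]) simp
    finally show ?thesis using h that by simp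
  qed
  with li have "\<forall>v\<in>u ` {..<t}. C v = 0" unfolding lin_indep_vecs_def by blast
  thus ?thesis using \<open>l < t\<close> by (simp add: C_def)
qed

lemma comb3:
  fixes c0 c1 c2 :: "'a::comm_ring_1"
  assumes "(u0, v0) \<noteq> (u1, v1)" "(u0, v0) \<noteq> (u2, v2)" "(u1, v1) \<noteq> (u2, v2)"
    and "c0 + (if u1 = u0 then c1 else 0) + (if u2 = u0 then c2 else 0) = 0"
    and "(if u0 = u1 then c0 else 0) + c1 + (if u2 = u1 then c2 else 0) = 0"
    and "(if u0 = u2 then c0 else 0) + (if u1 = u2 then c1 else 0) + c2 = 0"
    and "c0 + (if v1 = v0 then c1 else 0) + (if v2 = v0 then c2 else 0) = 0"
    and "(if v0 = v1 then c0 else 0) + c1 + (if v2 = v1 then c2 else 0) = 0"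
    and "(if v0 = v2 then c0 else 0) + (if v1 = v2 then c1 else 0) + c2 = 0"
  shows "c0 = 0 \<and> c1 = 0 \<and> c2 = 0"
  using assms by (auto split: if_splits)

lemma comb:
  fixes c :: "nat \<Rightarrow> 'a::comm_ring_1"
  assumes t3: "t \<le> 3" and inj: "inj_on (\<lambda>l. (u l, v l)) {..<t}"
    and hu: "\<forall>l<t. (\<Sum>l'\<in>{l'\<in>{..<t}. u l' = u l}. c l') = 0"
    and hv: "\<forall>l<t. (\<Sum>l'\<in>{l'\<in>{..<t}. v l' = v l}. c l') = 0"
  shows "\<forall>l<t. c l = 0"
proof -
  have hu': "\<forall>l<t. (\<Sum>l'<t. if u l' = u l then c l' else 0) = 0"
    using hu by (simp add: sum.inter_filter[symmetric])
  have hv': "\<forall>l<t. (\<Sum>l'<t. if v l' = v l then c l' else 0) = 0"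
    using hv by (simp add: sum.inter_filter[symmetric])
  have "t = 0 \<or> t = 1 \<or> t = 2 \<or> t = 3" using t3 by auto
  moreover {
    assume "t = 1"
    hence ?thesis using hu' by auto
  } moreover {
    assume t2: "t = 2"
    have d: "(u 0, v 0) \<noteq> (u 1, v 1)" using inj t2 unfolding inj_on_def
      by (metis lessThan_iff one_less_numeral_iff semiring_norm(76) zero_less_numeral zero_neq_one)
    have "c 0 = 0 \<and> c 1 = 0"
      using hu'[rule_format, of 0] hu'[rule_format, of 1] hv'[rule_format, of 0] hv'[rule_format, of 1] d t2
      by (auto simp: numeral_2_eq_2 lessThan_Suc split: if_splits)
    hence ?thesis using t2 less_2_cases by auto
  } moreover {
    assume t3: "t = 3"
    have d: "(u 0, v 0) \<noteq> (u 1, v 1)" "(u 0, v 0) \<noteq> (u 2, v 2)" "(u 1, v 1) \<noteq> (u 2, v 2)"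
      using inj t3 unfolding inj_on_def by fastforce+
    have l3: "\<forall>l<3. l = 0 \<or> l = 1 \<or> l = (2::nat)" by auto
    have "c 0 = 0 \<and> c 1 = 0 \<and> c 2 = 0"
      using hu'[rule_format, of 0] hu'[rule_format, of 1] hu'[rule_format, of 2]
        hv'[rule_format, of 0] hv'[rule_format, of 1] hv'[rule_format, of 2] d t3
      by (auto simp: numeral_3_eq_3 numeral_2_eq_2 lessThan_Suc split: if_splits)
    hence ?thesis using l3 t3 by metis
  }
  ultimately show ?thesis by auto
qed

lemma card_bij_filter:
  assumes "bij_betw g A B"
  shows "card {p\<in>A. Q (g p)} = card {z\<in>B. Q z}"
proof -
  have "bij_betw g {p\<in>A. Q (g p)} {z\<in>B. Q z}"
    using assms unfolding bij_betw_def inj_on_def by auto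
  thus ?thesis by (rule bij_betw_same_card)
qed



lemma div_from_mult: "(x::nat) * y = z \<Longrightarrow> y > 0 \<Longrightarrow> x = z div y"
  by auto

theorem mainTheorem9:
  fixes M N k1 k2 :: nat
    and S1 S2 :: "(nat \<Rightarrow> 'a::{finite, field}) set"
  assumes "M > 0" and "N > 0"
    and "finite S1" and "card S1 = k1" and "t_independent 3 M S1"
    and "finite S2" and "card S2 = k2" and "t_independent 3 N S2"
  shows "\<exists>L :: nat \<Rightarrow> nat \<Rightarrow> nat \<Rightarrow> 'a.
           MOFR (k1 * k2) (CARD('a) ^ M) (CARD('a) ^ N) L \<and>
           t_orthogonal 3 (k1 * k2) (CARD('a) ^ M) (CARD('a) ^ N) L"
proof -
  define q where "q = CARD('a)"
  have q0: "q > 0" unfolding q_def by simp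
  define m where "m = q ^ M"
  define n where "n = q ^ N"
  define X where "X = (vecsI {..<M} :: (nat \<Rightarrow> 'a) set)"
  define Y where "Y = (vecsI {..<N} :: (nat \<Rightarrow> 'a) set)"
  have cX: "card X = m" unfolding X_def m_def q_def by (subst card_vecsI) auto
  have cY: "card Y = n" unfolding Y_def n_def q_def by (subst card_vecsI) auto
  have fX: "finite X" unfolding X_def by (rule finite_vecsI) simp
  have fY: "finite Y" unfolding Y_def by (rule finite_vecsI) simp
  obtain rx where rx: "bij_betw rx {0..<m} X" using ex_bij_betw_nat_finite[OF fX] cX by metis
  obtain ry where ry: "bij_betw ry {0..<n} Y" using ex_bij_betw_nat_finite[OF fY] cY by metis
  have fP: "finite (S1 \<times> S2)" using assms by simp
  have cP: "card (S1 \<times> S2) = k1 * k2" using assms by (simp add: card_cartesian_product)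
  obtain pr where pr: "bij_betw pr {0..<k1 * k2} (S1 \<times> S2)"
    using ex_bij_betw_nat_finite[OF fP] cP by metis
  define L :: "nat \<Rightarrow> nat \<Rightarrow> nat \<Rightarrow> 'a" where
    "L a i j = dotI {..<M} (fst (pr a)) (rx i) + dotI {..<N} (snd (pr a)) (ry j)" for a i j
  have pr_in: "pr a \<in> S1 \<times> S2" if "a < k1 * k2" for a
    using bij_betwE[OF pr] that by auto
  have ti1: "lin_indep_vecs M T" if "T \<subseteq> S1" "card T \<le> 3" for T
    using assms(5) that unfolding t_independent_def by blast
  have ti2: "lin_indep_vecs N T" if "T \<subseteq> S2" "card T \<le> 3" for T
    using assms(8) that unfolding t_independent_def by blast
  have cnt: "card {(i,j). i<m \<and> j<n \<and> (\<forall>l<t. L (idx l) i j = s l)} * q^t = q^(M+N)"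
    if t3: "t \<le> 3" and inj: "inj_on idx {0..<t}" and rng: "idx ` {0..<t} \<subseteq> {0..<k1*k2}"
    for t idx and s :: "nat \<Rightarrow> 'a"
  proof -
    define I where "I = (Inl ` {..<M} \<union> Inr ` {..<N} :: (nat + nat) set)"
    have fI: "finite I" unfolding I_def by simp
    have cI: "card I = M + N" unfolding I_def
      by (subst card_Un_disjoint) (auto simp: card_image)
    define g where "g = (\<lambda>(i,j). case_sum (rx i) (ry j) :: nat + nat \<Rightarrow> 'a)"
    have bg: "bij_betw g ({0..<m} \<times> {0..<n}) (vecsI I)"
    proof (rule bij_betw_byWitness[where f'="\<lambda>z. (inv_into {0..<m} rx (z \<circ> Inl), inv_into {0..<n} ry (z \<circ> Inr))"])
      show "\<forall>a\<in>{0..<m} \<times> {0..<n}. (inv_into {0..<m} rx (g a \<circ> Inl), inv_into {0..<n} ry (g a \<circ> Inr)) = a"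
        using bij_betw_inv_into_left[OF rx] bij_betw_inv_into_left[OF ry]
        by (auto simp: g_def comp_def)
      have zl: "z \<circ> Inl \<in> X" and zr: "z \<circ> Inr \<in> Y" if "z \<in> vecsI I" for z :: "nat + nat \<Rightarrow> 'a"
        using that by (auto simp: X_def Y_def vecsI_def I_def)
      show "\<forall>z\<in>vecsI I. g (inv_into {0..<m} rx (z \<circ> Inl), inv_into {0..<n} ry (z \<circ> Inr)) = z"
      proof
        fix z :: "nat + nat \<Rightarrow> 'a" assume "z \<in> vecsI I"
        hence "rx (inv_into {0..<m} rx (z \<circ> Inl)) = z \<circ> Inl" "ry (inv_into {0..<n} ry (z \<circ> Inr)) = z \<circ> Inr"
          using bij_betw_inv_into_right[OF rx] bij_betw_inv_into_right[OF ry] zl zr by auto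
        thus "g (inv_into {0..<m} rx (z \<circ> Inl), inv_into {0..<n} ry (z \<circ> Inr)) = z"
          by (auto simp: g_def fun_eq_iff split: sum.split)
      qed
      show "g ` ({0..<m} \<times> {0..<n}) \<subseteq> vecsI I"
      proof safe
        fix i j assume "i \<in> {0..<m}" "j \<in> {0..<n}"
        hence "rx i \<in> X" "ry j \<in> Y" using rx ry unfolding bij_betw_def by auto
        thus "g (i, j) \<in> vecsI I"
          by (auto simp: g_def X_def Y_def vecsI_def I_def split: sum.split)
      qed
      show "(\<lambda>z. (inv_into {0..<m} rx (z \<circ> Inl), inv_into {0..<n} ry (z \<circ> Inr))) ` vecsI I \<subseteq> {0..<m} \<times> {0..<n}"
        using bij_betwE[OF bij_betw_inv_into[OF rx]] bij_betwE[OF bij_betw_inv_into[OF ry]] zl zr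
        by blast
    qed
    define u where "u l = fst (pr (idx l))" for l
    define v where "v l = snd (pr (idx l))" for l
    define W where "W l = case_sum (u l) (v l)" for l
    have dW: "dotI I (W l) (g (i,j)) = L (idx l) i j" for l i j
    proof -
      have "dotI I (W l) (g (i,j)) = (\<Sum>x\<in>Inl ` {..<M}. W l x * g (i,j) x) + (\<Sum>x\<in>Inr ` {..<N}. W l x * g (i,j) x)"
        unfolding dotI_def I_def by (rule sum.union_disjoint) auto
      also have "\<dots> = L (idx l) i j"
        by (simp add: sum.reindex L_def dotI_def W_def g_def u_def v_def)
      finally show ?thesis .
    qed
    have seteq: "{(i,j). i<m \<and> j<n \<and> (\<forall>l<t. L (idx l) i j = s l)}
        = {p \<in> {0..<m} \<times> {0..<n}. (\<lambda>z. \<forall>l<t. dotI I (W l) z = s l) (g p)}"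
      by (auto simp: dW)
    have ind: "\<forall>c. (\<forall>i\<in>I. (\<Sum>l<t. c l * W l i) = 0) \<longrightarrow> (\<forall>l<t. c l = 0)"
    proof (rule allI, rule impI)
      fix c assume h: "\<forall>i\<in>I. (\<Sum>l<t. c l * W l i) = 0"
      have hu: "\<forall>a<M. (\<Sum>l<t. c l * u l a) = 0"
      proof (intro allI impI)
        fix a assume "a < M"
        hence "Inl a \<in> I" by (simp add: I_def)
        from h[rule_format, OF this] show "(\<Sum>l<t. c l * u l a) = 0" by (simp add: W_def)
      qed
      have hv: "\<forall>a<N. (\<Sum>l<t. c l * v l a) = 0"
      proof (intro allI impI)
        fix a assume "a < N"
        hence "Inr a \<in> I" by (simp add: I_def)
        from h[rule_format, OF this] show "(\<Sum>l<t. c l * v l a) = 0" by (simp add: W_def)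
      qed
      have idxr: "idx l < k1 * k2" if "l < t" for l using rng that by (auto simp: image_subset_iff)
      have "u ` {..<t} \<subseteq> S1" using pr_in idxr by (force simp: u_def)
      moreover have "card (u ` {..<t}) \<le> 3" using t3 card_image_le[of "{..<t}" u] by simp
      ultimately have liu: "lin_indep_vecs M (u ` {..<t})" by (rule ti1)
      have "v ` {..<t} \<subseteq> S2" using pr_in idxr by (force simp: v_def)
      moreover have "card (v ` {..<t}) \<le> 3" using t3 card_image_le[of "{..<t}" v] by simp
      ultimately have liv: "lin_indep_vecs N (v ` {..<t})" by (rule ti2)
      have injuv: "inj_on (\<lambda>l. (u l, v l)) {..<t}"
      proof (rule inj_onI)
        fix a b assume "a \<in> {..<t}" "b \<in> {..<t}" "(u a, v a) = (u b, v b)"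
        hence "pr (idx a) = pr (idx b)" by (simp add: u_def v_def prod_eq_iff)
        moreover have "inj_on pr {0..<k1*k2}" using pr by (simp add: bij_betw_def)
        ultimately have "idx a = idx b" using idxr \<open>a \<in> {..<t}\<close> \<open>b \<in> {..<t}\<close>
          by (auto dest: inj_onD)
        thus "a = b" using inj \<open>a \<in> {..<t}\<close> \<open>b \<in> {..<t}\<close> by (auto dest: inj_onD)
      qed
      show "\<forall>l<t. c l = 0"
        by (rule comb[OF t3 injuv]) (use group[OF liu hu] group[OF liv hv] in auto)
    qed
    have "card {(i,j). i<m \<and> j<n \<and> (\<forall>l<t. L (idx l) i j = s l)}
        = card {z \<in> vecsI I. \<forall>l<t. dotI I (W l) z = s l}"
      unfolding seteq by (rule card_bij_filter[OF bg])
    thus ?thesis using fiber[OF fI ind, of s] cI by (simp add: q_def)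
  qed
  have mn: "m * n = q ^ (M + N)" by (simp add: m_def n_def power_add)
  have rowcnt: "card {j. j < n \<and> L a i j = s} = n div q" if ak: "a < k1 * k2" for a i s
  proof -
    obtain u v where uv: "pr a = (u, v)" "u \<in> S1" "v \<in> S2" using pr_in[OF ak] by auto
    have li: "lin_indep_vecs N {v}" using ti2[of "{v}"] uv by simp
    have ind: "\<forall>c::nat\<Rightarrow>'a. (\<forall>i\<in>{..<N}. (\<Sum>l<1. c l * (\<lambda>_. v) l i) = 0) \<longrightarrow> (\<forall>l<1. c l = 0)"
    proof (intro allI impI)
      fix c :: "nat \<Rightarrow> 'a" and l :: nat
      assume "\<forall>i\<in>{..<N}. (\<Sum>l<1. c l * (\<lambda>_. v) l i) = 0" and l1: "l < 1"
      from this(1) have "\<forall>i<N. (\<Sum>w\<in>{v}. (\<lambda>_. c 0) w * w i) = 0" by simp (metis lessThan_iff)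
      from li[unfolded lin_indep_vecs_def, THEN spec[of _ "\<lambda>_. c 0"], THEN mp, OF this]
      have "c 0 = 0" by simp
      thus "c l = 0" using l1 by simp
    qed
    define Q where "Q = (\<lambda>y. \<forall>l<1. dotI {..<N} ((\<lambda>_::nat. v) l) y = s - dotI {..<M} u (rx i))"
    have "{j. j < n \<and> L a i j = s} = {j \<in> {0..<n}. Q (ry j)}"
      unfolding Q_def L_def uv by (auto simp: eq_diff_eq add.commute)
    moreover have "card {j \<in> {0..<n}. Q (ry j)} = card {y \<in> Y. Q y}"
      by (rule card_bij_filter[OF ry])
    moreover have "card {y \<in> Y. Q y} * q ^ 1 = n"
      using fiber[OF _ ind, of "\<lambda>_. s - dotI {..<M} u (rx i)"] unfolding Q_def Y_def q_def n_def by simp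
    ultimately show ?thesis using q0 by (metis div_from_mult power_one_right)
  qed
  have colcnt: "card {i. i < m \<and> L a i j = s} = m div q" if ak: "a < k1 * k2" for a j s
  proof -
    obtain u v where uv: "pr a = (u, v)" "u \<in> S1" "v \<in> S2" using pr_in[OF ak] by auto
    have li: "lin_indep_vecs M {u}" using ti1[of "{u}"] uv by simp
    have ind: "\<forall>c::nat\<Rightarrow>'a. (\<forall>i\<in>{..<M}. (\<Sum>l<1. c l * (\<lambda>_. u) l i) = 0) \<longrightarrow> (\<forall>l<1. c l = 0)"
    proof (intro allI impI)
      fix c :: "nat \<Rightarrow> 'a" and l :: nat
      assume "\<forall>i\<in>{..<M}. (\<Sum>l<1. c l * (\<lambda>_. u) l i) = 0" and l1: "l < 1"
      from this(1) have "\<forall>i<M. (\<Sum>w\<in>{u}. (\<lambda>_. c 0) w * w i) = 0" by simp (metis lessThan_iff)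
      from li[unfolded lin_indep_vecs_def, THEN spec[of _ "\<lambda>_. c 0"], THEN mp, OF this]
      have "c 0 = 0" by simp
      thus "c l = 0" using l1 by simp
    qed
    define Q where "Q = (\<lambda>x. \<forall>l<1. dotI {..<M} ((\<lambda>_::nat. u) l) x = s - dotI {..<N} v (ry j))"
    have "{i. i < m \<and> L a i j = s} = {i \<in> {0..<m}. Q (rx i)}"
      unfolding Q_def L_def uv by (auto simp: eq_diff_eq)
    moreover have "card {i \<in> {0..<m}. Q (rx i)} = card {x \<in> X. Q x}"
      by (rule card_bij_filter[OF rx])
    moreover have "card {x \<in> X. Q x} * q ^ 1 = m"
      using fiber[OF _ ind, of "\<lambda>_. s - dotI {..<N} v (ry j)"] unfolding Q_def X_def q_def m_def by simp
    ultimately show ?thesis using q0 by (metis div_from_mult power_one_right)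
  qed
  have orth: "orthogonal_fr m n (L a) (L b)" if "a < k1 * k2" "b < k1 * k2" "a \<noteq> b" for a b
    unfolding orthogonal_fr_def
  proof (intro allI)
    fix s1 s2 :: 'a
    define idx where "idx = (\<lambda>l::nat. if l = 0 then a else b)"
    define ss where "ss = (\<lambda>l::nat. if l = 0 then s1 else s2)"
    have inj: "inj_on idx {0..<2}" using that by (auto simp: inj_on_def idx_def)
    have rng: "idx ` {0..<2} \<subseteq> {0..<k1*k2}" using that by (auto simp: idx_def)
    have l2: "(\<forall>l<2. P l) \<longleftrightarrow> P 0 \<and> P 1" for P :: "nat \<Rightarrow> bool"
      using less_2_cases by auto
    have E: "{(i, j). i < m \<and> j < n \<and> L a i j = s1 \<and> L b i j = s2}
        = {(i,j). i<m \<and> j<n \<and> (\<forall>l<2. L (idx l) i j = ss l)}"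
      unfolding l2 by (simp add: idx_def ss_def)
    have C: "card {(i,j). i<m \<and> j<n \<and> (\<forall>l<2. L (idx l) i j = ss l)} * CARD('a)^2 = m * n"
      using cnt[OF _ inj rng, of ss] mn by (simp add: q_def)
    have pos: "CARD('a)^2 > 0" using q0 by (simp add: q_def)
    show "card {(i, j). i < m \<and> j < n \<and> L a i j = s1 \<and> L b i j = s2} = m * n div CARD('a) ^ 2"
      unfolding E by (rule div_from_mult[OF C pos])
  qed
  have "MOFR (k1 * k2) m n L"
    unfolding MOFR_def freq_rect_def
  proof (intro conjI allI impI)
    fix a assume "a < k1 * k2"
    show "CARD('a) dvd m" using assms(1) by (simp add: m_def q_def)
    show "CARD('a) dvd n" using assms(2) by (simp add: n_def q_def)
    show "\<And>i s. i < m \<Longrightarrow> card {j. j < n \<and> L a i j = s} = n div CARD('a)"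
      using rowcnt[OF \<open>a < k1 * k2\<close>] by (simp add: q_def)
    show "\<And>j s. j < n \<Longrightarrow> card {i. i < m \<and> L a i j = s} = m div CARD('a)"
      using colcnt[OF \<open>a < k1 * k2\<close>] by (simp add: q_def)
  next
    fix a b assume "a < k1 * k2" "b < k1 * k2" "a \<noteq> b"
    thus "orthogonal_fr m n (L a) (L b)" by (rule orth)
  qed
  moreover have "t_orthogonal 3 (k1 * k2) m n L"
    unfolding t_orthogonal_def
  proof (intro allI impI)
    fix idx :: "nat \<Rightarrow> nat" and s :: "nat \<Rightarrow> 'a"
    assume "inj_on idx {0..<3}" "idx ` {0..<3} \<subseteq> {0..<k1 * k2}"
    from cnt[OF _ this, of s] mn q0 div_from_mult[of _ "q^3" "m*n"]
    show "card {(i, j). i < m \<and> j < n \<and> (\<forall>l<3. L (idx l) i j = s l)} = m * n div CARD('a) ^ 3"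
      by (simp add: q_def)
  qed
  ultimately show ?thesis unfolding m_def n_def q_def by blast
qed

end
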